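(* Let $m$ be a positive integer, $\gamma\in C^m(\mathbb{R},\mathbb{R}^3)$, and $K\subseteq\mathbb{R}$ a compact set containing at least $m+1$ points. If $\gamma$ satisfies the $A/V$ condition on $K$, then $$\lim_{\substack{\operatorname{diam}X\to0\\ a,b\in X\subseteq K,\ a<b\\ \#X=m+1}}\left|\frac{A(\gamma;a,b)}{V(\gamma;a,b)}-\frac{A[X,\gamma;a,b]}{V[X,\gamma;a,b]}\right|=0,$$ i.e. for every $\varepsilon>0$ there is $\delta>0$ such that the displayed difference is $<\varepsilon$ for all $X\subseteq K$ with $\#X=m+1$, $\operatorname{diam}X<\delta$, and $a,b\in X$ with $a<b$. In particular, $\gamma$ satisfies the discrete $A/V$ condition on $K$.
   Context: $C^m(\mathbb{R},\mathbb{R}^3)$: curves whose components are $m$-times continuously differentiable with bounded $m$th derivative. For $\gamma=(f,g,h)$ and $a\in\mathbb{R}$, $T_af(x)=\sum_{k=0}^m\frac{f^{(k)}(a)}{k!}(x-a)^k$ (similarly $T_ag$); $A(\gamma;a,b)= h(b)-h(a)-2\int_a^b\big((T_af)'T_ag-(T_ag)'T_af\big) + 2f(a)(g(b)-T_ag(b)) - 2g(a)(f(b)-T_af(b))$, $V(\gamma;a,b)=(b-a)^{2m}+(b-a)^m\int_a^b(|(T_af)'|+|(T_ag)'|)$. $\gamma$ satisfies the $A/V$ condition on $E$ if for every $\varepsilon>0$ there is $\delta>0$ with $|A(\gamma;a,b)/V(\gamma;a,b)|<\varepsilon$ for all $a,b\in E$ with $0<b-a<\delta$. For $X$ a set of $m+1$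 distinct points, $P(X;\phi)$ is the unique polynomial of degree $\le m$ agreeing with $\phi$ on $X$; $P_f=P(X;f)$, $P_g=P(X;g)$, and for $a,b\in X$: $A[X,\gamma;a,b]=h(b)-h(a)-2\int_a^b(P_f'P_g-P_g'P_f)$, $V[X,\gamma;a,b]=\operatorname{diam}(X)^{2m}+\operatorname{diam}(X)^m\int_a^b(|P_f'|+|P_g'|)$. $\gamma$ satisfies the discrete $A/V$ condition on $E$ if for every $\varepsilon>0$ there is $\delta>0$ such that $|A[X,\gamma;a,b]/V[X,\gamma;a,b]|<\varepsilon$ for all $X\subseteq E$ with $\#X=m+1$, $\operatorname{diam}X<\delta$, and $a,b\in X$ with $a<b$. *)

theory Defs
  imports "HOL-Analysis.Analysis" "HOL-Computational_Algebra.Polynomial"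
begin

text \<open>A curve gamma = (f,g,h) in C^m(R,R^3) is represented by its three real component functions.\<close>
definition Cm :: "nat \<Rightarrow> (real \<Rightarrow> real) \<Rightarrow> bool" where
  "Cm m \<phi> \<longleftrightarrow>
     (\<forall>k<m. \<forall>x. ((deriv ^^ k) \<phi> has_real_derivative (deriv ^^ Suc k) \<phi> x) (at x))
     \<and> continuous_on UNIV ((deriv ^^ m) \<phi>)
     \<and> bounded (range ((deriv ^^ m) \<phi>))"

definition Cm_curve :: "nat \<Rightarrow> (real \<Rightarrow> real) \<Rightarrow> (real \<Rightarrow> real) \<Rightarrow> (real \<Rightarrow> real) \<Rightarrow> bool" where
  "Cm_curve m f g h \<longleftrightarrow> Cm m f \<and> Cm m g \<and> Cm m h"

definition taylor :: "nat \<Rightarrow> (real \<Rightarrow> real) \<Rightarrow> real \<Rightarrow> real \<Rightarrow> real" where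
  "taylor m \<phi> a x = (\<Sum>k\<le>m. (deriv ^^ k) \<phi> a / fact k * (x - a) ^ k)"

definition A_cont :: "nat \<Rightarrow> (real \<Rightarrow> real) \<Rightarrow> (real \<Rightarrow> real) \<Rightarrow> (real \<Rightarrow> real) \<Rightarrow> real \<Rightarrow> real \<Rightarrow> real" where
  "A_cont m f g h a b =
     h b - h a
     - 2 * integral {a..b} (\<lambda>x. deriv (taylor m f a) x * taylor m g a x
                               - deriv (taylor m g a) x * taylor m f a x)
     + 2 * f a * (g b - taylor m g a b) - 2 * g a * (f b - taylor m f a b)"

definition V_cont :: "nat \<Rightarrow> (real \<Rightarrow> real) \<Rightarrow> (real \<Rightarrow> real) \<Rightarrow> real \<Rightarrow> real \<Rightarrow> real" where
  "V_cont m f g a b =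
     (b - a) ^ (2 * m)
     + (b - a) ^ m * integral {a..b} (\<lambda>x. \<bar>deriv (taylor m f a) x\<bar> + \<bar>deriv (taylor m g a) x\<bar>)"

definition AV_condition :: "nat \<Rightarrow> (real \<Rightarrow> real) \<Rightarrow> (real \<Rightarrow> real) \<Rightarrow> (real \<Rightarrow> real) \<Rightarrow> real set \<Rightarrow> bool" where
  "AV_condition m f g h E \<longleftrightarrow>
     (\<forall>\<epsilon>>0. \<exists>\<delta>>0. \<forall>a\<in>E. \<forall>b\<in>E. 0 < b - a \<and> b - a < \<delta> \<longrightarrow>
        \<bar>A_cont m f g h a b / V_cont m f g a b\<bar> < \<epsilon>)"

text \<open>P(X;phi): the unique polynomial of degree at most m agreeing with phi on X (#X = m+1).\<close>
definition interp :: "nat \<Rightarrow> real set \<Rightarrow> (real \<Rightarrow> real) \<Rightarrow> real poly" where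
  "interp m X \<phi> = (THE p. degree p \<le> m \<and> (\<forall>x\<in>X. poly p x = \<phi> x))"

definition A_disc :: "nat \<Rightarrow> real set \<Rightarrow> (real \<Rightarrow> real) \<Rightarrow> (real \<Rightarrow> real) \<Rightarrow> (real \<Rightarrow> real) \<Rightarrow> real \<Rightarrow> real \<Rightarrow> real" where
  "A_disc m X f g h a b =
     h b - h a
     - 2 * integral {a..b} (\<lambda>x. poly (pderiv (interp m X f)) x * poly (interp m X g) x
                               - poly (pderiv (interp m X g)) x * poly (interp m X f) x)"

definition V_disc :: "nat \<Rightarrow> real set \<Rightarrow> (real \<Rightarrow> real) \<Rightarrow> (real \<Rightarrow> real) \<Rightarrow> real \<Rightarrow> real \<Rightarrow> real" where
  "V_disc m X f g a b =
     diameter X ^ (2 * m)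
     + diameter X ^ m * integral {a..b} (\<lambda>x. \<bar>poly (pderiv (interp m X f)) x\<bar>
                                            + \<bar>poly (pderiv (interp m X g)) x\<bar>)"

definition discrete_AV_condition :: "nat \<Rightarrow> (real \<Rightarrow> real) \<Rightarrow> (real \<Rightarrow> real) \<Rightarrow> (real \<Rightarrow> real) \<Rightarrow> real set \<Rightarrow> bool" where
  "discrete_AV_condition m f g h E \<longleftrightarrow>
     (\<forall>\<epsilon>>0. \<exists>\<delta>>0. \<forall>X a b. X \<subseteq> E \<and> card X = m + 1 \<and> diameter X < \<delta>
        \<and> a \<in> X \<and> b \<in> X \<and> a < b \<longrightarrow>
        \<bar>A_disc m X f g h a b / V_disc m X f g a b\<bar> < \<epsilon>)"

end

theory Submission
  imports Defs
begin

lemma deriv_poly_iter: "(deriv ^^ k) (poly p) = poly ((pderiv ^^ k) (p::real poly))"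
proof (induction k)
  case 0 then show ?case by simp
next
  case (Suc k)
  show ?case
    by (simp add: Suc fun_eq_iff DERIV_imp_deriv[OF poly_DERIV])
qed

lemma interp_exists:
  fixes \<phi> :: "real \<Rightarrow> real"
  assumes "finite X"
  shows "\<exists>p. degree p \<le> card X - 1 \<and> (\<forall>x\<in>X. poly p x = \<phi> x)"
  using assms
proof (induction X rule: finite_induct)
  case empty
  then show ?case by (intro exI[of _ 0]) simp
next
  case (insert x X)
  obtain p where p: "degree p \<le> card X - 1" "\<forall>y\<in>X. poly p y = \<phi> y" using insert by blast
  define q where "q = (\<Prod>y\<in>X. [:-y,1:])"
  have qy: "poly q y = 0" if "y \<in> X" for y
    unfolding q_def poly_prod using insert.hyps(1) that
    by (intro prod_zero) auto
  have qx: "poly q x \<noteq> 0"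
    unfolding q_def poly_prod using insert.hyps by auto
  have dq: "degree q \<le> card X"
    unfolding q_def using degree_prod_sum_le[OF insert.hyps(1), of "\<lambda>y. [:-y,1:]"] by simp
  define c where "c = (\<phi> x - poly p x) / poly q x"
  define p' where "p' = p + smult c q"
  have "degree p' \<le> card X"
    unfolding p'_def using p(1) dq degree_add_le_max[of p "smult c q"] degree_smult_le[of c q] by linarith
  moreover have "\<forall>y\<in>insert x X. poly p' y = \<phi> y"
    using qx qy p(2) by (auto simp: p'_def c_def)
  ultimately show ?case using insert.hyps by (intro exI[of _ p']) simp
qed

lemma interp_unique:
  fixes p q :: "real poly"
  assumes "degree p \<le> m" "degree q \<le> m" "finite X" "card X = m + 1"
    "\<forall>x\<in>X. poly p x = poly q x"
  shows "p = q"
proof (rule ccontr)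
  assume "p \<noteq> q"
  then have nz: "p - q \<noteq> 0" by simp
  have "X \<subseteq> {x. poly (p - q) x = 0}" using assms(5) by auto
  then have "card X \<le> card {x. poly (p - q) x = 0}"
    using poly_roots_finite[OF nz] by (intro card_mono) auto
  also have "\<dots> \<le> degree (p - q)" by (rule card_poly_roots_bound[OF nz])
  also have "\<dots> \<le> m" using assms(1,2) degree_diff_le by blast
  finally show False using assms(4) by simp
qed

lemma interp_props:
  assumes "finite X" "card X = m + 1"
  shows "degree (interp m X \<phi>) \<le> m \<and> (\<forall>x\<in>X. poly (interp m X \<phi>) x = \<phi> x)"
proof -
  obtain p where p: "degree p \<le> card X - 1" "\<forall>x\<in>X. poly p x = \<phi> x"
    using interp_exists[OF assms(1)] by blast
  have ex: "\<exists>!p. degree p \<le> m \<and> (\<forall>x\<in>X. poly p x = \<phi> x)"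
  proof (rule ex1I[of _ p])
    show "degree p \<le> m \<and> (\<forall>x\<in>X. poly p x = \<phi> x)" using p assms by simp
  next
    fix q assume "degree q \<le> m \<and> (\<forall>x\<in>X. poly q x = \<phi> x)"
    then show "q = p" using p assms by (intro interp_unique[of q m p X]) auto
  qed
  show ?thesis unfolding interp_def by (rule theI'[OF ex])
qed


definition tpoly :: "nat \<Rightarrow> (real \<Rightarrow> real) \<Rightarrow> real \<Rightarrow> real poly" where
  "tpoly m \<phi> a = pcompose (\<Sum>k\<le>m. monom ((deriv ^^ k) \<phi> a / fact k) k) [:-a, 1:]"

lemma poly_tpoly: "poly (tpoly m \<phi> a) = taylor m \<phi> a"
  by (simp add: fun_eq_iff tpoly_def taylor_def poly_pcompose poly_sum poly_monom)

lemma degree_tpoly: "degree (tpoly m \<phi> a) \<le> m"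
proof -
  have "degree (\<Sum>k\<le>m. monom ((deriv ^^ k) \<phi> a / fact k) k) \<le> m"
    by (rule degree_sum_le) (auto intro: order.trans[OF degree_monom_le])
  then show ?thesis unfolding tpoly_def by (simp add: degree_pcompose)
qed

lemma pderiv_iter_pcompose:
  "(pderiv ^^ k) (pcompose Q [:-a, 1::real:]) = pcompose ((pderiv ^^ k) Q) [:-a, 1:]"
  by (induction k) (simp_all add: pderiv_pcompose pderiv_pCons)

lemma coeff_pderiv_iter:
  "coeff ((pderiv ^^ k) (Q::real poly)) n = pochhammer (of_nat (Suc n)) k * coeff Q (n + k)"
proof (induction k arbitrary: n)
  case 0 then show ?case by simp
next
  case (Suc k)
  show ?case
    by (simp add: coeff_pderiv Suc pochhammer_rec algebra_simps)
qed

lemma tpoly_deriv_at: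
  assumes "k \<le> m"
  shows "poly ((pderiv ^^ k) (tpoly m \<phi> a)) a = (deriv ^^ k) \<phi> a"
proof -
  let ?Q = "(\<Sum>k\<le>m. monom ((deriv ^^ k) \<phi> a / fact k) k)"
  have "poly ((pderiv ^^ k) (tpoly m \<phi> a)) a = poly ((pderiv ^^ k) ?Q) 0"
    unfolding tpoly_def pderiv_iter_pcompose by (simp add: poly_pcompose)
  also have "\<dots> = coeff ((pderiv ^^ k) ?Q) 0" by (simp add: poly_0_coeff_0)
  also have "\<dots> = fact k * coeff ?Q k"
    by (simp add: coeff_pderiv_iter pochhammer_fact)
  also have "coeff ?Q k = (deriv ^^ k) \<phi> a / fact k"
    using assms by (simp add: coeff_sum coeff_monom)
  finally show ?thesis by simp
qed


lemma mvt_abs_bound: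
  fixes F F' :: "real \<Rightarrow> real"
  assumes der: "\<And>x. (F has_real_derivative F' x) (at x)"
    and bd: "\<And>t. t \<in> {\<alpha>..\<beta>} \<Longrightarrow> \<bar>F' t\<bar> \<le> B"
    and x: "x \<in> {\<alpha>..\<beta>}" and z: "z \<in> {\<alpha>..\<beta>}"
  shows "\<bar>F x - F z\<bar> \<le> B * \<bar>x - z\<bar>"
proof -
  have main: "\<bar>F v - F u\<bar> \<le> B * \<bar>v - u\<bar>" if "u < v" "u \<in> {\<alpha>..\<beta>}" "v \<in> {\<alpha>..\<beta>}" for u v
  proof -
    obtain t where t: "u < t" "t < v" "F v - F u = (v - u) * F' t"
      using MVT2[OF \<open>u < v\<close>, of F F'] der by blast
    have "t \<in> {\<alpha>..\<beta>}" using t that by auto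
    then have "\<bar>F' t\<bar> \<le> B" by (rule bd)
    then show ?thesis using t that
      by (simp add: abs_mult mult.commute mult_right_mono)
  qed
  consider "x < z" | "x = z" | "z < x" by linarith
  then show ?thesis
  proof cases
    case 1 then show ?thesis using main[of x z] x z by (simp add: abs_minus_commute)
  next
    case 2 
    have "0 \<le> \<bar>F' x\<bar>" by simp
    with bd[OF x] 2 show ?thesis by simp
  next
    case 3 then show ?thesis using main[of z x] x z by simp
  qed
qed

lemma rolle_set:
  fixes G G' :: "real \<Rightarrow> real"
  assumes der: "\<And>x. (G has_real_derivative G' x) (at x)"
  shows "finite Z \<Longrightarrow> card Z = Suc j \<Longrightarrow> \<forall>z\<in>Z. G z = 0 \<Longrightarrow>
    \<exists>Z'. Z' \<subseteq> {Min Z..Max Z} \<and> finite Z' \<and> card Z' = j \<and> (\<forall>z\<in>Z'. G' z = 0)"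
proof (induction j arbitrary: Z)
  case 0 then show ?case by (intro exI[of _ "{}"]) simp
next
  case (Suc j)
  define z1 where "z1 = Max Z"
  define Z0 where "Z0 = Z - {z1}"
  have ne: "Z \<noteq> {}" using Suc.prems by auto
  have z1Z: "z1 \<in> Z" unfolding z1_def using Suc.prems ne by simp
  have cZ0: "card Z0 = Suc j" unfolding Z0_def using Suc.prems z1Z by simp
  have fZ0: "finite Z0" unfolding Z0_def using Suc.prems by simp
  have ne0: "Z0 \<noteq> {}" using cZ0 by auto
  obtain Z0' where Z0': "Z0' \<subseteq> {Min Z0..Max Z0}" "finite Z0'" "card Z0' = j" "\<forall>z\<in>Z0'. G' z = 0"
    using Suc.IH[OF fZ0 cZ0] Suc.prems(3) unfolding Z0_def by auto
  define z0 where "z0 = Max Z0"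
  have z0Z0: "z0 \<in> Z0" unfolding z0_def using fZ0 ne0 by simp
  have "z0 < z1"
  proof -
    have "z0 \<le> z1" unfolding z1_def using z0Z0 Suc.prems(1) unfolding Z0_def by simp
    moreover have "z0 \<noteq> z1" using z0Z0 unfolding Z0_def by auto
    ultimately show ?thesis by simp
  qed
  have Gz: "G z0 = G z1" using Suc.prems(3) z1Z z0Z0 unfolding Z0_def by auto
  have cont: "continuous_on {z0..z1} G"
    using der by (meson DERIV_isCont continuous_at_imp_continuous_on)
  obtain \<xi> where xi: "z0 < \<xi>" "\<xi> < z1" "DERIV G \<xi> :> 0"
    using Rolle[OF \<open>z0 < z1\<close> Gz cont] der real_differentiable_def by blast
  have G'xi: "G' \<xi> = 0" using DERIV_unique[OF der xi(3)] .
  have nin: "\<xi> \<notin> Z0'" using Z0' xi unfolding z0_def by auto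
  have MinZ: "Min Z \<le> Min Z0" using Suc.prems(1) fZ0 ne0 unfolding Z0_def
    by (simp add: Min_antimono)
  have MaxZ: "Max Z0 \<le> Max Z" using Suc.prems(1) fZ0 ne0 unfolding Z0_def
    by (simp add: Max_mono)
  have "Min Z0 \<le> z0" unfolding z0_def using fZ0 ne0 by simp
  show ?case
  proof (intro exI[of _ "insert \<xi> Z0'"] conjI)
    show "insert \<xi> Z0' \<subseteq> {Min Z..Max Z}"
      using Z0'(1) MinZ MaxZ xi \<open>Min Z0 \<le> z0\<close> z1_def by auto
    show "finite (insert \<xi> Z0')" using Z0' by simp
    show "card (insert \<xi> Z0') = Suc j" using Z0' nin by simp
    show "\<forall>z\<in>insert \<xi> Z0'. G' z = 0" using Z0' G'xi by simp
  qed
qed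

lemma rolle_gen:
  fixes F :: "nat \<Rightarrow> real \<Rightarrow> real"
  assumes der: "\<And>k x. k < n \<Longrightarrow> (F k has_real_derivative F (Suc k) x) (at x)"
    and Z: "finite Z" "card Z = Suc n" "\<forall>z\<in>Z. F 0 z = 0"
  shows "k \<le> n \<Longrightarrow> \<exists>Z'. Z' \<subseteq> {Min Z..Max Z} \<and> finite Z' \<and> card Z' = Suc (n - k) \<and> (\<forall>z\<in>Z'. F k z = 0)"
proof (induction k)
  case 0 then show ?case using Z by (intro exI[of _ Z]) auto
next
  case (Suc k)
  then obtain Zk where Zk: "Zk \<subseteq> {Min Z..Max Z}" "finite Zk" "card Zk = Suc (n - k)" "\<forall>z\<in>Zk. F k z = 0"
    by auto
  have c: "card Zk = Suc (n - Suc k) + 1" using Zk(3) Suc.prems by simp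
  have "k < n" using Suc.prems by simp
  obtain Z' where Z': "Z' \<subseteq> {Min Zk..Max Zk}" "finite Z'" "card Z' = Suc (n - Suc k)" "\<forall>z\<in>Z'. F (Suc k) z = 0"
    using rolle_set[of "F k" "F (Suc k)" Zk "Suc (n - Suc k)"] der[OF \<open>k < n\<close>] Zk c by auto
  have ne: "Zk \<noteq> {}" using Zk by auto
  have "{Min Zk..Max Zk} \<subseteq> {Min Z..Max Z}"
    using Zk(1,2) ne Min_in Max_in by fastforce
  then show ?case using Z' by blast
qed

lemma downward_bound:
  fixes F :: "nat \<Rightarrow> real \<Rightarrow> real"
  assumes der: "\<And>k x. k < n \<Longrightarrow> (F k has_real_derivative F (Suc k) x) (at x)"
    and zeros: "\<And>k. k < n \<Longrightarrow> \<exists>z\<in>{\<alpha>..\<beta>}. F k z = 0"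
    and top: "\<And>x. x \<in> {\<alpha>..\<beta>} \<Longrightarrow> \<bar>F n x\<bar> \<le> M"
    and len: "\<beta> - \<alpha> \<le> D"
  shows "j \<le> n \<Longrightarrow> x \<in> {\<alpha>..\<beta>} \<Longrightarrow> \<bar>F (n - j) x\<bar> \<le> M * D ^ j"
proof (induction j arbitrary: x)
  case 0 then show ?case using top by simp
next
  case (Suc j)
  define k where "k = n - Suc j"
  have kn: "k < n" and kS: "Suc k = n - j" using Suc.prems unfolding k_def by auto
  obtain z where z: "z \<in> {\<alpha>..\<beta>}" "F k z = 0" using zeros[OF kn] by blast
  have "\<bar>F k x - F k z\<bar> \<le> (M * D ^ j) * \<bar>x - z\<bar>"
    by (rule mvt_abs_bound[of "F k" "F (Suc k)"]) (use der[OF kn] Suc kS z in auto)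
  moreover have "0 \<le> M * D ^ j" using Suc.IH[of z] Suc.prems z by fastforce
  moreover have "\<bar>x - z\<bar> \<le> D" using z Suc.prems len by auto
  ultimately have "\<bar>F k x\<bar> \<le> M * D ^ j * D" using z
    by (smt (verit) mult_left_mono)
  then show ?case unfolding k_def by (simp add: algebra_simps)
qed


lemma degree_pderiv_iter: "degree ((pderiv ^^ k) (p::real poly)) = degree p - k"
  by (induction k) (simp_all add: degree_pderiv)

lemma Cm_der:
  assumes "Cm m f" "k < m"
  shows "((deriv ^^ k) f has_real_derivative (deriv ^^ Suc k) f x) (at x)"
  using assms unfolding Cm_def by blast

lemma poly_approx:
  fixes f :: "real \<Rightarrow> real" and p :: "real poly"
  assumes Cm: "Cm m f" and deg: "degree p \<le> m"
    and zeros: "\<And>k. k \<le> m \<Longrightarrow> \<exists>z\<in>{\<alpha>..\<beta>}. (deriv ^^ k) f z = poly ((pderiv ^^ k) p) z"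
    and osc: "\<And>x y. x \<in> {\<alpha>..\<beta>} \<Longrightarrow> y \<in> {\<alpha>..\<beta>} \<Longrightarrow> \<bar>(deriv ^^ m) f x - (deriv ^^ m) f y\<bar> \<le> \<omega>"
    and len: "\<beta> - \<alpha> \<le> D"
    and k: "k \<le> m" and x: "x \<in> {\<alpha>..\<beta>}"
  shows "\<bar>(deriv ^^ k) f x - poly ((pderiv ^^ k) p) x\<bar> \<le> \<omega> * D ^ (m - k)"
proof -
  define F where "F = (\<lambda>k x. (deriv ^^ k) f x - poly ((pderiv ^^ k) p) x)"
  have der: "(F k has_real_derivative F (Suc k) x) (at x)" if "k < m" for k x
    unfolding F_def
  proof (rule DERIV_diff)
    show "((deriv ^^ k) f has_real_derivative (deriv ^^ Suc k) f x) (at x)" by (rule Cm_der[OF Cm that])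
    have "poly ((pderiv ^^ Suc k) p) = poly (pderiv ((pderiv ^^ k) p))" by simp
    then show "((\<lambda>x. poly ((pderiv ^^ k) p) x) has_real_derivative poly ((pderiv ^^ Suc k) p) x) (at x)"
      using poly_DERIV[of "(pderiv ^^ k) p" x] by simp
  qed
  have zF: "\<exists>z\<in>{\<alpha>..\<beta>}. F k z = 0" if "k < m" for k
    using zeros[of k] that unfolding F_def by auto
  have "degree ((pderiv ^^ m) p) = 0" using deg by (simp add: degree_pderiv_iter)
  then obtain c where c: "(pderiv ^^ m) p = [:c:]" by (metis degree_eq_zeroE)
  obtain zm where zm: "zm \<in> {\<alpha>..\<beta>}" "(deriv ^^ m) f zm = c"
    using zeros[of m] c by auto
  have top: "\<bar>F m y\<bar> \<le> \<omega>" if "y \<in> {\<alpha>..\<beta>}" for y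
    using osc[OF that zm(1)] zm(2) c unfolding F_def by simp
  have "\<bar>F (m - (m - k)) x\<bar> \<le> \<omega> * D ^ (m - k)"
    by (rule downward_bound[of m F \<alpha> \<beta> \<omega> D]) (use der zF top len x in auto)
  then show ?thesis using k unfolding F_def by simp
qed


lemma F_der:
  assumes Cm: "Cm m f" and "k < m"
  shows "((\<lambda>x. (deriv ^^ k) f x - poly ((pderiv ^^ k) p) x) has_real_derivative
          (deriv ^^ Suc k) f x - poly ((pderiv ^^ Suc k) p) x) (at x)"
proof (rule DERIV_diff)
  show "((deriv ^^ k) f has_real_derivative (deriv ^^ Suc k) f x) (at x)" by (rule Cm_der[OF Cm assms(2)])
  have "poly ((pderiv ^^ Suc k) p) = poly (pderiv ((pderiv ^^ k) p))" by simp
  then show "((\<lambda>x. poly ((pderiv ^^ k) p) x) has_real_derivative poly ((pderiv ^^ Suc k) p) x) (at x)"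
    using poly_DERIV[of "(pderiv ^^ k) p" x] by simp
qed

lemma diameter_finite_real:
  fixes X :: "real set"
  assumes "finite X" "X \<noteq> {}"
  shows "diameter X = Max X - Min X"
proof (rule antisym)
  have "diameter X \<le> diameter {Min X..Max X}"
    by (rule diameter_subset) (use assms in auto)
  also have "\<dots> = Max X - Min X" using Max_ge[OF assms(1) Min_in[OF assms]] by (simp add: diameter_closed_interval)
  finally show "diameter X \<le> Max X - Min X" .
  have "dist (Max X) (Min X) \<le> diameter X"
    by (rule diameter_bounded_bound) (use assms finite_imp_bounded in auto)
  then show "Max X - Min X \<le> diameter X" using assms by (simp add: dist_real_def)
qed

lemma interp_taylor_bounds:
  fixes f :: "real \<Rightarrow> real"
  assumes m: "0 < m" and Cm: "Cm m f" and X: "finite X" "card X = m + 1" and a: "a \<in> X"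
    and osc: "\<And>x y. x \<in> {Min X..Max X} \<Longrightarrow> y \<in> {Min X..Max X} \<Longrightarrow>
                  \<bar>(deriv ^^ m) f x - (deriv ^^ m) f y\<bar> \<le> \<omega>"
    and x: "x \<in> {Min X..Max X}"
  shows "\<bar>poly (interp m X f) x - poly (tpoly m f a) x\<bar> \<le> 2 * \<omega> * (Max X - Min X) ^ m"
    and "\<bar>poly (pderiv (interp m X f)) x - poly (pderiv (tpoly m f a)) x\<bar> \<le> 2 * \<omega> * (Max X - Min X) ^ (m - 1)"
proof -
  define P where "P = interp m X f"
  define T where "T = tpoly m f a"
  have ne: "X \<noteq> {}" using X by auto
  have aI: "a \<in> {Min X..Max X}" using a X by auto
  have P: "degree P \<le> m" "\<forall>x\<in>X. poly P x = f x" using interp_props[OF X] unfolding P_def by auto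
  have degT: "degree T \<le> m" unfolding T_def by (rule degree_tpoly)
  have zP: "\<exists>z\<in>{Min X..Max X}. (deriv ^^ k) f z = poly ((pderiv ^^ k) P) z" if km: "k \<le> m" for k
  proof -
    obtain Z' where Z': "Z' \<subseteq> {Min X..Max X}" "finite Z'" "card Z' = Suc (m - k)"
      "\<forall>z\<in>Z'. (\<lambda>k x. (deriv ^^ k) f x - poly ((pderiv ^^ k) P) x) k z = 0"
      using rolle_gen[of m "\<lambda>k x. (deriv ^^ k) f x - poly ((pderiv ^^ k) P) x" X k, OF F_der[OF Cm, where p=P] X(1) _ _ km]
        X P(2) by auto
    then obtain z where "z \<in> Z'" by fastforce
    then show ?thesis using Z' by auto
  qed
  have zT: "\<exists>z\<in>{Min X..Max X}. (deriv ^^ k) f z = poly ((pderiv ^^ k) T) z" if "k \<le> m" for k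
    using aI tpoly_deriv_at[OF that, of f a] unfolding T_def by force
  have b: "\<bar>(deriv ^^ k) f x - poly ((pderiv ^^ k) Q) x\<bar> \<le> \<omega> * (Max X - Min X) ^ (m - k)"
    if "k \<le> m" "degree Q \<le> m"
      "\<And>k. k \<le> m \<Longrightarrow> \<exists>z\<in>{Min X..Max X}. (deriv ^^ k) f z = poly ((pderiv ^^ k) Q) z" for k Q
    by (rule poly_approx[OF Cm that(2) that(3) osc _ that(1) x]) auto
  have P0: "\<bar>f x - poly P x\<bar> \<le> \<omega> * (Max X - Min X) ^ m" using b[of 0 P] P zP by simp
  have T0: "\<bar>f x - poly T x\<bar> \<le> \<omega> * (Max X - Min X) ^ m" using b[of 0 T] degT zT by simp
  have P1: "\<bar>deriv f x - poly (pderiv P) x\<bar> \<le> \<omega> * (Max X - Min X) ^ (m - 1)"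
    using b[of 1 P] P zP m by simp
  have T1: "\<bar>deriv f x - poly (pderiv T) x\<bar> \<le> \<omega> * (Max X - Min X) ^ (m - 1)"
    using b[of 1 T] degT zT m by simp
  show "\<bar>poly (interp m X f) x - poly (tpoly m f a) x\<bar> \<le> 2 * \<omega> * (Max X - Min X) ^ m"
    using P0 T0 unfolding P_def T_def by linarith
  show "\<bar>poly (pderiv (interp m X f)) x - poly (pderiv (tpoly m f a)) x\<bar> \<le> 2 * \<omega> * (Max X - Min X) ^ (m - 1)"
    using P1 T1 unfolding P_def T_def by linarith
qed


lemma ftc_poly:
  fixes p :: "real poly"
  assumes "a \<le> x"
  shows "((\<lambda>t. poly (pderiv p) t) has_integral (poly p x - poly p a)) {a..x}"
proof (rule fundamental_theorem_of_calculus[OF assms])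
  fix t assume "t \<in> {a..x}"
  show "((\<lambda>t. poly p t) has_vector_derivative poly (pderiv p) t) (at t within {a..x})"
    using poly_DERIV[of p t] has_real_derivative_iff_has_vector_derivative
      has_vector_derivative_at_within by blast
qed

lemma cont_poly_int: "(\<lambda>t. poly (p::real poly) t) integrable_on {a..b}"
  by (intro integrable_continuous_interval continuous_intros)

lemma poly_var_bound:
  fixes p :: "real poly"
  assumes "a \<le> x" "x \<le> b"
  shows "\<bar>poly p x - poly p a\<bar> \<le> integral {a..b} (\<lambda>t. \<bar>poly (pderiv p) t\<bar>)"
proof -
  have "poly p x - poly p a = integral {a..x} (\<lambda>t. poly (pderiv p) t)"
    using ftc_poly[OF assms(1), of p] by (simp add: integral_unique)
  also have "\<bar>\<dots>\<bar> \<le> integral {a..x} (\<lambda>t. \<bar>poly (pderiv p) t\<bar>)"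
  proof -
    have i1: "poly (pderiv p) integrable_on {a..x}" using cont_poly_int[of "pderiv p"] by simp
    have i2: "(\<lambda>t. \<bar>poly (pderiv p) t\<bar>) integrable_on {a..x}"
      by (intro integrable_continuous_interval continuous_intros)
    show ?thesis using integral_norm_bound_integral[OF i1 i2] by simp
  qed
  also have "\<dots> \<le> integral {a..b} (\<lambda>t. \<bar>poly (pderiv p) t\<bar>)"
    by (rule integral_subset_le) (use assms in \<open>auto intro!: integrable_continuous_interval continuous_intros\<close>)
  finally show ?thesis .
qed


lemma prod_bound:
  fixes x y A B :: real
  assumes "\<bar>x\<bar> \<le> A" "\<bar>y\<bar> \<le> B"
  shows "\<bar>x * y\<bar> \<le> A * B"
  unfolding abs_mult by (rule mult_mono) (use assms in auto)

lemma integral_key: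
  fixes Pf Pg Tf Tg :: "real poly"
  assumes ab: "a < b" "b - a \<le> D" and eta: "0 \<le> \<eta>" and m: "0 < m"
    and Ua: "poly Pf a = poly Tf a" and Wa: "poly Pg a = poly Tg a"
    and bU: "\<And>x. x \<in> {a..b} \<Longrightarrow> \<bar>poly Pf x - poly Tf x\<bar> \<le> \<eta> * D ^ m"
    and bU': "\<And>x. x \<in> {a..b} \<Longrightarrow> \<bar>poly (pderiv Pf) x - poly (pderiv Tf) x\<bar> \<le> \<eta> * D ^ (m - 1)"
    and bW: "\<And>x. x \<in> {a..b} \<Longrightarrow> \<bar>poly Pg x - poly Tg x\<bar> \<le> \<eta> * D ^ m"
    and bW': "\<And>x. x \<in> {a..b} \<Longrightarrow> \<bar>poly (pderiv Pg) x - poly (pderiv Tg) x\<bar> \<le> \<eta> * D ^ (m - 1)"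
  shows "\<bar>(integral {a..b} (\<lambda>x. poly (pderiv Pf) x * poly Pg x - poly (pderiv Pg) x * poly Pf x)
          - integral {a..b} (\<lambda>x. poly (pderiv Tf) x * poly Tg x - poly (pderiv Tg) x * poly Tf x))
          - (poly Tg a * (poly Pf b - poly Tf b) - poly Tf a * (poly Pg b - poly Tg b))\<bar>
         \<le> 3 * \<eta> * D ^ m * integral {a..b} (\<lambda>x. \<bar>poly (pderiv Tf) x\<bar> + \<bar>poly (pderiv Tg) x\<bar>)
           + 2 * \<eta>\<^sup>2 * D ^ m * D ^ m"
    and "integral {a..b} (\<lambda>x. \<bar>poly (pderiv Tf) x\<bar> + \<bar>poly (pderiv Tg) x\<bar>)
         \<le> integral {a..b} (\<lambda>x. \<bar>poly (pderiv Pf) x\<bar> + \<bar>poly (pderiv Pg) x\<bar>) + 2 * \<eta> * D ^ m"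
proof -
  define U where "U = Pf - Tf"
  define W where "W = Pg - Tg"
  define fa where "fa = poly Tf a"
  define ga where "ga = poly Tg a"
  define R where "R = smult ga U - smult fa W"
  define E where "E = (\<lambda>x. poly (pderiv U) x * (poly Tg x - ga) - poly (pderiv W) x * (poly Tf x - fa)
      + poly (pderiv Tf) x * poly W x - poly (pderiv Tg) x * poly U x
      + poly (pderiv U) x * poly W x - poly (pderiv W) x * poly U x)"
  define S where "S = integral {a..b} (\<lambda>x. \<bar>poly (pderiv Tf) x\<bar> + \<bar>poly (pderiv Tg) x\<bar>)"
  have D0: "0 \<le> D" using ab by simp
  have DD: "D * D ^ (m - 1) = D ^ m" using m by (cases m) auto
  have pw: "(poly (pderiv Pf) x * poly Pg x - poly (pderiv Pg) x * poly Pf x)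
          - (poly (pderiv Tf) x * poly Tg x - poly (pderiv Tg) x * poly Tf x)
          = E x + poly (pderiv R) x" for x
    by (simp add: E_def U_def W_def R_def pderiv_diff pderiv_smult algebra_simps)
  have intE: "E integrable_on {a..b}" unfolding E_def
    by (intro integrable_continuous_interval continuous_intros)
  have intR: "poly (pderiv R) integrable_on {a..b}" using cont_poly_int[of "pderiv R"] by simp
  have "integral {a..b} (\<lambda>x. poly (pderiv Pf) x * poly Pg x - poly (pderiv Pg) x * poly Pf x)
          - integral {a..b} (\<lambda>x. poly (pderiv Tf) x * poly Tg x - poly (pderiv Tg) x * poly Tf x)
        = integral {a..b} (\<lambda>x. (poly (pderiv Pf) x * poly Pg x - poly (pderiv Pg) x * poly Pf x)
          - (poly (pderiv Tf) x * poly Tg x - poly (pderiv Tg) x * poly Tf x))"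
    by (rule integral_diff[symmetric]) (intro integrable_continuous_interval continuous_intros)+
  also have "\<dots> = integral {a..b} (\<lambda>x. E x + poly (pderiv R) x)" by (simp only: pw)
  also have "\<dots> = integral {a..b} E + integral {a..b} (poly (pderiv R))"
    using integral_add[OF intE intR] by simp
  also have "integral {a..b} (poly (pderiv R)) = poly R b - poly R a"
    using ftc_poly[of a b R] ab by (simp add: integral_unique)
  also have "poly R b - poly R a = ga * (poly Pf b - poly Tf b) - fa * (poly Pg b - poly Tg b)"
    using Ua Wa by (simp add: R_def U_def W_def algebra_simps)
  finally have eq: "integral {a..b} (\<lambda>x. poly (pderiv Pf) x * poly Pg x - poly (pderiv Pg) x * poly Pf x)
          - integral {a..b} (\<lambda>x. poly (pderiv Tf) x * poly Tg x - poly (pderiv Tg) x * poly Tf x)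
          - (ga * (poly Pf b - poly Tf b) - fa * (poly Pg b - poly Tg b)) = integral {a..b} E"
    by simp
  have intTf: "(\<lambda>x. \<bar>poly (pderiv Tf) x\<bar>) integrable_on {a..b}"
    by (intro integrable_continuous_interval continuous_intros)
  have intTg: "(\<lambda>x. \<bar>poly (pderiv Tg) x\<bar>) integrable_on {a..b}"
    by (intro integrable_continuous_interval continuous_intros)
  have intT: "(\<lambda>x. \<bar>poly (pderiv Tf) x\<bar> + \<bar>poly (pderiv Tg) x\<bar>) integrable_on {a..b}"
    by (intro integrable_continuous_interval continuous_intros)
  have S0: "0 \<le> S" unfolding S_def by (rule integral_nonneg[OF intT]) auto
  have varf: "\<bar>poly Tf x - fa\<bar> \<le> S" if "x \<in> {a..b}" for x
  proof -
    have "\<bar>poly Tf x - fa\<bar> \<le> integral {a..b} (\<lambda>t. \<bar>poly (pderiv Tf) t\<bar>)"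
      unfolding fa_def by (rule poly_var_bound) (use that in auto)
    also have "\<dots> \<le> S" unfolding S_def by (rule integral_le[OF intTf intT]) auto
    finally show ?thesis .
  qed
  have varg: "\<bar>poly Tg x - ga\<bar> \<le> S" if "x \<in> {a..b}" for x
  proof -
    have "\<bar>poly Tg x - ga\<bar> \<le> integral {a..b} (\<lambda>t. \<bar>poly (pderiv Tg) t\<bar>)"
      unfolding ga_def by (rule poly_var_bound) (use that in auto)
    also have "\<dots> \<le> S" unfolding S_def by (rule integral_le[OF intTg intT]) auto
    finally show ?thesis .
  qed
  define e0 where "e0 = \<eta> * D ^ m"
  define e1 where "e1 = \<eta> * D ^ (m - 1)"
  define bnd where "bnd = (\<lambda>x. (2 * e1 * S + 2 * e1 * e0) + \<eta> * D ^ m * (\<bar>poly (pderiv Tf) x\<bar> + \<bar>poly (pderiv Tg) x\<bar>))"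
  have pb: "\<bar>E x\<bar> \<le> bnd x" if x: "x \<in> {a..b}" for x
  proof -
    have u: "\<bar>poly U x\<bar> \<le> e0" and u': "\<bar>poly (pderiv U) x\<bar> \<le> e1"
      and w: "\<bar>poly W x\<bar> \<le> e0" and w': "\<bar>poly (pderiv W) x\<bar> \<le> e1"
      using bU[OF x] bU'[OF x] bW[OF x] bW'[OF x]
      by (simp_all add: U_def W_def e0_def e1_def pderiv_diff)
    have 1: "\<bar>poly (pderiv U) x * (poly Tg x - ga)\<bar> \<le> e1 * S" by (rule prod_bound[OF u' varg[OF x]])
    have 2: "\<bar>poly (pderiv W) x * (poly Tf x - fa)\<bar> \<le> e1 * S" by (rule prod_bound[OF w' varf[OF x]])
    have 3: "\<bar>poly (pderiv Tf) x * poly W x\<bar> \<le> \<bar>poly (pderiv Tf) x\<bar> * e0" by (rule prod_bound[OF _ w]) simp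
    have 4: "\<bar>poly (pderiv Tg) x * poly U x\<bar> \<le> \<bar>poly (pderiv Tg) x\<bar> * e0" by (rule prod_bound[OF _ u]) simp
    have 5: "\<bar>poly (pderiv U) x * poly W x\<bar> \<le> e1 * e0" by (rule prod_bound[OF u' w])
    have 6: "\<bar>poly (pderiv W) x * poly U x\<bar> \<le> e1 * e0" by (rule prod_bound[OF w' u])
    have "\<bar>E x\<bar> \<le> e1 * S + e1 * S + \<bar>poly (pderiv Tf) x\<bar> * e0 + \<bar>poly (pderiv Tg) x\<bar> * e0 + e1 * e0 + e1 * e0"
      unfolding E_def using 1 2 3 4 5 6 by linarith
    then show ?thesis unfolding bnd_def e0_def by (simp add: algebra_simps)
  qed
  have intbnd: "bnd integrable_on {a..b}" unfolding bnd_def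
    by (intro integrable_continuous_interval continuous_intros)
  have "\<bar>integral {a..b} E\<bar> \<le> integral {a..b} bnd"
    using integral_norm_bound_integral[OF intE intbnd] pb by simp
  also have "integral {a..b} bnd = (b - a) * (2 * e1 * S + 2 * e1 * e0) + \<eta> * D ^ m * S"
  proof -
    have "integral {a..b} bnd = integral {a..b} (\<lambda>x. 2 * e1 * S + 2 * e1 * e0)
        + integral {a..b} (\<lambda>x. \<eta> * D ^ m * (\<bar>poly (pderiv Tf) x\<bar> + \<bar>poly (pderiv Tg) x\<bar>))"
      unfolding bnd_def
      by (rule integral_add) (intro integrable_continuous_interval continuous_intros)+
    then show ?thesis using ab by (simp add: S_def)
  qed
  also have "\<dots> \<le> D * (2 * e1 * S + 2 * e1 * e0) + \<eta> * D ^ m * S"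
  proof -
    have "0 \<le> 2 * e1 * S + 2 * e1 * e0" unfolding e1_def e0_def using eta D0 S0 by simp
    then show ?thesis using ab by (simp add: mult_right_mono)
  qed
  also have "\<dots> = 3 * \<eta> * D ^ m * S + 2 * \<eta>\<^sup>2 * D ^ m * D ^ m"
    unfolding e1_def e0_def power2_eq_square
    by (simp add: algebra_simps DD[symmetric])
  finally show "\<bar>(integral {a..b} (\<lambda>x. poly (pderiv Pf) x * poly Pg x - poly (pderiv Pg) x * poly Pf x)
          - integral {a..b} (\<lambda>x. poly (pderiv Tf) x * poly Tg x - poly (pderiv Tg) x * poly Tf x))
          - (poly Tg a * (poly Pf b - poly Tf b) - poly Tf a * (poly Pg b - poly Tg b))\<bar>
         \<le> 3 * \<eta> * D ^ m * integral {a..b} (\<lambda>x. \<bar>poly (pderiv Tf) x\<bar> + \<bar>poly (pderiv Tg) x\<bar>)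
           + 2 * \<eta>\<^sup>2 * D ^ m * D ^ m"
    using eq unfolding S_def fa_def ga_def by simp
  have "S \<le> integral {a..b} (\<lambda>x. (\<bar>poly (pderiv Pf) x\<bar> + \<bar>poly (pderiv Pg) x\<bar>) + 2 * e1)"
    unfolding S_def
  proof (rule integral_le[OF intT])
    show "(\<lambda>x. (\<bar>poly (pderiv Pf) x\<bar> + \<bar>poly (pderiv Pg) x\<bar>) + 2 * e1) integrable_on {a..b}"
      by (intro integrable_continuous_interval continuous_intros)
    fix x assume x: "x \<in> {a..b}"
    show "\<bar>poly (pderiv Tf) x\<bar> + \<bar>poly (pderiv Tg) x\<bar> \<le> \<bar>poly (pderiv Pf) x\<bar> + \<bar>poly (pderiv Pg) x\<bar> + 2 * e1"
      using bU'[OF x] bW'[OF x] unfolding e1_def by linarith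
  qed
  also have "\<dots> = integral {a..b} (\<lambda>x. \<bar>poly (pderiv Pf) x\<bar> + \<bar>poly (pderiv Pg) x\<bar>) + (b - a) * (2 * e1)"
    by (subst integral_add) (auto intro!: integrable_continuous_interval continuous_intros simp: ab less_imp_le)
  also have "\<dots> \<le> integral {a..b} (\<lambda>x. \<bar>poly (pderiv Pf) x\<bar> + \<bar>poly (pderiv Pg) x\<bar>) + D * (2 * e1)"
    using ab eta D0 unfolding e1_def by (simp add: mult_right_mono)
  also have "D * (2 * e1) = 2 * \<eta> * D ^ m" unfolding e1_def using DD by (simp add: algebra_simps)
  finally show "integral {a..b} (\<lambda>x. \<bar>poly (pderiv Tf) x\<bar> + \<bar>poly (pderiv Tg) x\<bar>)
         \<le> integral {a..b} (\<lambda>x. \<bar>poly (pderiv Pf) x\<bar> + \<bar>poly (pderiv Pg) x\<bar>) + 2 * \<eta> * D ^ m"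
    unfolding S_def .
qed


lemma deriv_taylor: "deriv (taylor m f a) = poly (pderiv (tpoly m f a))"
  using deriv_poly_iter[of 1 "tpoly m f a"] by (simp add: poly_tpoly)

lemma deriv_poly: "deriv (poly p) = poly (pderiv (p::real poly))"
  using deriv_poly_iter[of 1 p] by simp

lemma key_estimate:
  fixes f g h :: "real \<Rightarrow> real"
  assumes m: "0 < m" and Cf: "Cm m f" and Cg: "Cm m g"
    and X: "finite X" "card X = m + 1" and a: "a \<in> X" and b: "b \<in> X" and ab: "a < b"
    and oscf: "\<And>x y. x \<in> {Min X..Max X} \<Longrightarrow> y \<in> {Min X..Max X} \<Longrightarrow>
                  \<bar>(deriv ^^ m) f x - (deriv ^^ m) f y\<bar> \<le> \<omega>"
    and oscg: "\<And>x y. x \<in> {Min X..Max X} \<Longrightarrow> y \<in> {Min X..Max X} \<Longrightarrow>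
                  \<bar>(deriv ^^ m) g x - (deriv ^^ m) g y\<bar> \<le> \<omega>"
    and om: "0 \<le> \<omega>" "2 * \<omega> \<le> 1"
  shows "\<bar>A_cont m f g h a b - A_disc m X f g h a b\<bar> \<le> 44 * \<omega> * V_disc m X f g a b"
    and "V_cont m f g a b \<le> 3 * V_disc m X f g a b"
    and "0 < V_disc m X f g a b"
proof -
  define D where "D = Max X - Min X"
  define \<eta> where "\<eta> = 2 * \<omega>"
  define Pf where "Pf = interp m X f"
  define Pg where "Pg = interp m X g"
  define Tf where "Tf = tpoly m f a"
  define Tg where "Tg = tpoly m g a"
  have ne: "X \<noteq> {}" using a by auto
  have diam: "diameter X = D" unfolding D_def by (rule diameter_finite_real[OF X(1) ne])
  have sub: "{a..b} \<subseteq> {Min X..Max X}" using a b X(1) by auto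
  have baD: "b - a \<le> D" unfolding D_def using a b X(1) by (simp add: diff_mono)
  have D0: "0 < D" using ab baD by simp
  have bf: "\<bar>poly Pf x - poly Tf x\<bar> \<le> \<eta> * D ^ m" "\<bar>poly (pderiv Pf) x - poly (pderiv Tf) x\<bar> \<le> \<eta> * D ^ (m - 1)"
    if "x \<in> {a..b}" for x
    using interp_taylor_bounds[OF m Cf X a oscf, of x] that sub
    unfolding Pf_def Tf_def \<eta>_def D_def by auto
  have bg: "\<bar>poly Pg x - poly Tg x\<bar> \<le> \<eta> * D ^ m" "\<bar>poly (pderiv Pg) x - poly (pderiv Tg) x\<bar> \<le> \<eta> * D ^ (m - 1)"
    if "x \<in> {a..b}" for x
    using interp_taylor_bounds[OF m Cg X a oscg, of x] that sub
    unfolding Pg_def Tg_def \<eta>_def D_def by auto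
  have Pfx: "poly Pf x = f x" if "x \<in> X" for x using interp_props[OF X] that unfolding Pf_def by auto
  have Pgx: "poly Pg x = g x" if "x \<in> X" for x using interp_props[OF X] that unfolding Pg_def by auto
  have Tfa: "poly Tf a = f a" using tpoly_deriv_at[of 0 m f a] unfolding Tf_def by simp
  have Tga: "poly Tg a = g a" using tpoly_deriv_at[of 0 m g a] unfolding Tg_def by simp
  define IP where "IP = integral {a..b} (\<lambda>x. poly (pderiv Pf) x * poly Pg x - poly (pderiv Pg) x * poly Pf x)"
  define IT where "IT = integral {a..b} (\<lambda>x. poly (pderiv Tf) x * poly Tg x - poly (pderiv Tg) x * poly Tf x)"
  define S where "S = integral {a..b} (\<lambda>x. \<bar>poly (pderiv Tf) x\<bar> + \<bar>poly (pderiv Tg) x\<bar>)"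
  define SP where "SP = integral {a..b} (\<lambda>x. \<bar>poly (pderiv Pf) x\<bar> + \<bar>poly (pderiv Pg) x\<bar>)"
  have eta0: "0 \<le> \<eta>" "\<eta> \<le> 1" using om unfolding \<eta>_def by auto
  have K1: "\<bar>(IP - IT) - (poly Tg a * (poly Pf b - poly Tf b) - poly Tf a * (poly Pg b - poly Tg b))\<bar>
         \<le> 3 * \<eta> * D ^ m * S + 2 * \<eta>\<^sup>2 * D ^ m * D ^ m"
    and K2: "S \<le> SP + 2 * \<eta> * D ^ m"
    using integral_key[OF ab baD eta0(1) m, of Pf Tf Pg Tg] Pfx[OF a] Pgx[OF a] Tfa Tga bf bg
    unfolding IP_def IT_def S_def SP_def by auto
  have Ac: "A_cont m f g h a b = h b - h a - 2 * IT + 2 * f a * (g b - poly Tg b) - 2 * g a * (f b - poly Tf b)"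
    unfolding A_cont_def IT_def Tf_def Tg_def poly_tpoly[symmetric] by (simp add: deriv_poly)
  have Ad: "A_disc m X f g h a b = h b - h a - 2 * IP"
    unfolding A_disc_def IP_def Pf_def Pg_def by simp
  have Vc: "V_cont m f g a b = (b - a) ^ (2 * m) + (b - a) ^ m * S"
    unfolding V_cont_def S_def Tf_def Tg_def deriv_taylor by simp
  have Vd: "V_disc m X f g a b = D ^ m * D ^ m + D ^ m * SP"
    unfolding V_disc_def SP_def Pf_def Pg_def diam by (simp add: power_add[symmetric] mult_2)
  define Q where "Q = D ^ m"
  have Q0: "0 < Q" unfolding Q_def using D0 by simp
  have S0: "0 \<le> S" unfolding S_def
    by (rule integral_nonneg) (auto intro!: integrable_continuous_interval continuous_intros)
  have SP0: "0 \<le> SP" unfolding SP_def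
    by (rule integral_nonneg) (auto intro!: integrable_continuous_interval continuous_intros)
  have diffeq: "A_cont m f g h a b - A_disc m X f g h a b
      = 2 * ((IP - IT) - (poly Tg a * (poly Pf b - poly Tf b) - poly Tf a * (poly Pg b - poly Tg b)))"
    unfolding Ac Ad using Pfx[OF b] Pgx[OF b] Tfa Tga by (simp add: algebra_simps)
  have "\<bar>A_cont m f g h a b - A_disc m X f g h a b\<bar> \<le> 2 * (3 * \<eta> * Q * S + 2 * \<eta>\<^sup>2 * Q * Q)"
    unfolding diffeq Q_def using K1 by simp
  also have "\<dots> \<le> 2 * (3 * \<eta> * Q * (SP + 2 * \<eta> * Q) + 2 * \<eta>\<^sup>2 * Q * Q)"
    using K2 eta0 Q0 unfolding Q_def[symmetric] by (simp add: mult_left_mono)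
  also have "\<dots> = 6 * \<eta> * (Q * SP) + 16 * \<eta>\<^sup>2 * (Q * Q)"
    by (simp add: algebra_simps power2_eq_square)
  also have "\<dots> \<le> 6 * \<eta> * (Q * SP) + 16 * \<eta> * (Q * Q)"
  proof -
    have "\<eta>\<^sup>2 \<le> \<eta>" using eta0 by (simp add: power2_eq_square mult_left_le)
    then show ?thesis using Q0 by (simp add: mult_right_mono)
  qed
  also have "\<dots> \<le> 22 * \<eta> * (Q * Q + Q * SP)"
  proof -
    have n1: "0 \<le> \<eta> * (Q * SP)" "0 \<le> \<eta> * (Q * Q)" using eta0 Q0 SP0 by simp_all
    have "22 * \<eta> * (Q * Q + Q * SP) = 22 * (\<eta> * (Q * Q)) + 22 * (\<eta> * (Q * SP))"
      by (simp only: distrib_left mult.assoc)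
    then show ?thesis using n1 by linarith
  qed
  also have "\<dots> = 44 * \<omega> * V_disc m X f g a b" unfolding Vd \<eta>_def Q_def by simp
  finally show "\<bar>A_cont m f g h a b - A_disc m X f g h a b\<bar> \<le> 44 * \<omega> * V_disc m X f g a b" .
  have "V_cont m f g a b \<le> D ^ (2 * m) + D ^ m * S"
    unfolding Vc using ab baD S0 by (intro add_mono mult_right_mono power_mono) auto
  also have "\<dots> = Q * Q + Q * S" unfolding Q_def by (simp add: power_add[symmetric] mult_2)
  also have "\<dots> \<le> Q * Q + Q * (SP + 2 * \<eta> * Q)"
    using K2 Q0 unfolding Q_def[symmetric] by (simp add: mult_left_mono)
  also have "\<dots> \<le> 3 * (Q * Q + Q * SP)"
  proof -
    have n1: "\<eta> * (Q * Q) \<le> Q * Q" using eta0 Q0 by (simp add: mult_left_le_one_le)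
    have n2: "0 \<le> Q * SP" using Q0 SP0 by simp
    have e1: "Q * (SP + 2 * \<eta> * Q) = Q * SP + 2 * (\<eta> * (Q * Q))" by (simp add: algebra_simps)
    have e2: "3 * (Q * Q + Q * SP) = 3 * (Q * Q) + 3 * (Q * SP)" by (rule distrib_left)
    show ?thesis unfolding e1 e2 using n1 n2 by linarith
  qed
  finally show "V_cont m f g a b \<le> 3 * V_disc m X f g a b" unfolding Vd Q_def .
  show "0 < V_disc m X f g a b" unfolding Vd using Q0 SP0 unfolding Q_def
    by (simp add: add_pos_nonneg)
qed


lemma Vc_pos:
  assumes "a < b"
  shows "0 < V_cont m f g a b"
proof -
  have "0 \<le> integral {a..b} (\<lambda>x. \<bar>deriv (taylor m f a) x\<bar> + \<bar>deriv (taylor m g a) x\<bar>)"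
    unfolding deriv_taylor
    by (rule integral_nonneg) (auto intro!: integrable_continuous_interval continuous_intros)
  then show ?thesis unfolding V_cont_def using assms by (simp add: add_pos_nonneg)
qed

lemma discrete_from_AV:
  fixes f g h :: "real \<Rightarrow> real"
  assumes m: "0 < m" and C: "Cm_curve m f g h" and K: "compact K" and AV: "AV_condition m f g h K"
  shows "discrete_AV_condition m f g h K"
proof -
  have Cf: "Cm m f" and Cg: "Cm m g" using C unfolding Cm_curve_def by auto
  obtain B where B: "\<forall>x\<in>K. \<bar>x\<bar> \<le> B" using compact_imp_bounded[OF K] bounded_real by auto
  have KB: "K \<subseteq> {-B..B}" using B by force
  have ucf: "uniformly_continuous_on {-B..B} ((deriv ^^ m) f)"
    using Cf unfolding Cm_def
    by (intro compact_uniformly_continuous) (auto intro: continuous_on_subset)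
  have ucg: "uniformly_continuous_on {-B..B} ((deriv ^^ m) g)"
    using Cg unfolding Cm_def
    by (intro compact_uniformly_continuous) (auto intro: continuous_on_subset)
  show ?thesis unfolding discrete_AV_condition_def
  proof (intro allI impI)
    fix \<epsilon> :: real assume \<epsilon>: "0 < \<epsilon>"
    define \<omega> where "\<omega> = min (1/2) (\<epsilon> / 176)"
    have \<omega>0: "0 < \<omega>" "2 * \<omega> \<le> 1" "44 * \<omega> \<le> \<epsilon> / 4" unfolding \<omega>_def using \<epsilon> by auto
    obtain \<delta>c where \<delta>c: "\<delta>c > 0" "\<forall>a\<in>K. \<forall>b\<in>K. 0 < b - a \<and> b - a < \<delta>c \<longrightarrow>
        \<bar>A_cont m f g h a b / V_cont m f g a b\<bar> < \<epsilon> / 6"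
    proof -
      have "\<epsilon> / 6 > 0" using \<epsilon> by simp
      then show "(\<And>\<delta>c. \<delta>c > 0 \<Longrightarrow> \<forall>a\<in>K. \<forall>b\<in>K. 0 < b - a \<and> b - a < \<delta>c \<longrightarrow>
        \<bar>A_cont m f g h a b / V_cont m f g a b\<bar> < \<epsilon> / 6 \<Longrightarrow> thesis) \<Longrightarrow> thesis"
        using AV unfolding AV_condition_def by blast
    qed
    obtain \<delta>f where \<delta>f: "\<delta>f > 0" "\<forall>x\<in>{-B..B}. \<forall>x'\<in>{-B..B}. dist x' x < \<delta>f \<longrightarrow>
        dist ((deriv ^^ m) f x') ((deriv ^^ m) f x) < \<omega>"
      using ucf \<omega>0(1) unfolding uniformly_continuous_on_def by blast
    obtain \<delta>g where \<delta>g: "\<delta>g > 0" "\<forall>x\<in>{-B..B}. \<forall>x'\<in>{-B..B}. dist x' x < \<delta>g \<longrightarrow>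
        dist ((deriv ^^ m) g x') ((deriv ^^ m) g x) < \<omega>"
      using ucg \<omega>0(1) unfolding uniformly_continuous_on_def by blast
    define \<delta> where "\<delta> = min \<delta>c (min \<delta>f \<delta>g)"
    have \<delta>0: "\<delta> > 0" unfolding \<delta>_def using \<delta>c \<delta>f \<delta>g by simp
    show "\<exists>\<delta>>0. \<forall>X a b. X \<subseteq> K \<and> card X = m + 1 \<and> diameter X < \<delta> \<and> a \<in> X \<and> b \<in> X \<and> a < b \<longrightarrow>
        \<bar>A_disc m X f g h a b / V_disc m X f g a b\<bar> < \<epsilon>"
    proof (intro exI[of _ \<delta>] conjI allI impI \<delta>0)
      fix X a b assume H: "X \<subseteq> K \<and> card X = m + 1 \<and> diameter X < \<delta> \<and> a \<in> X \<and> b \<in> X \<and> a < b"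
      then have XK: "X \<subseteq> K" and cX: "card X = m + 1" and dX: "diameter X < \<delta>"
        and a: "a \<in> X" and b: "b \<in> X" and ab: "a < b" by auto
      have fX: "finite X" by (rule ccontr) (use cX in simp)
      have ne: "X \<noteq> {}" using a by auto
      have diam: "diameter X = Max X - Min X" by (rule diameter_finite_real[OF fX ne])
      have IB: "{Min X..Max X} \<subseteq> {-B..B}"
        using XK KB Min_in[OF fX ne] Max_in[OF fX ne] by auto
      have close: "\<bar>x - y\<bar> < min \<delta>f \<delta>g" if "x \<in> {Min X..Max X}" "y \<in> {Min X..Max X}" for x y
        using that dX diam unfolding \<delta>_def by auto
      have oscf: "\<bar>(deriv ^^ m) f x - (deriv ^^ m) f y\<bar> \<le> \<omega>"
        if "x \<in> {Min X..Max X}" "y \<in> {Min X..Max X}" for x y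
      proof -
        have "x \<in> {-B..B}" "y \<in> {-B..B}" using IB that by auto
        moreover have "dist x y < \<delta>f" using close[OF that] by (simp add: dist_real_def)
        ultimately have "dist ((deriv ^^ m) f x) ((deriv ^^ m) f y) < \<omega>" using \<delta>f(2) by blast
        then show ?thesis by (simp add: dist_real_def)
      qed
      have oscg: "\<bar>(deriv ^^ m) g x - (deriv ^^ m) g y\<bar> \<le> \<omega>"
        if "x \<in> {Min X..Max X}" "y \<in> {Min X..Max X}" for x y
      proof -
        have "x \<in> {-B..B}" "y \<in> {-B..B}" using IB that by auto
        moreover have "dist x y < \<delta>g" using close[OF that] by (simp add: dist_real_def)
        ultimately have "dist ((deriv ^^ m) g x) ((deriv ^^ m) g y) < \<omega>" using \<delta>g(2) by blast
        then show ?thesis by (simp add: dist_real_def)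
      qed
      note KE = key_estimate[OF m Cf Cg fX cX a b ab oscf oscg] 
      have KE1: "\<bar>A_cont m f g h a b - A_disc m X f g h a b\<bar> \<le> 44 * \<omega> * V_disc m X f g a b"
        and KE2: "V_cont m f g a b \<le> 3 * V_disc m X f g a b"
        and Vd: "0 < V_disc m X f g a b" using KE \<omega>0 by simp_all
      have baD: "b - a \<le> diameter X" unfolding diam using a b fX by (simp add: diff_mono)
      have "\<bar>A_cont m f g h a b / V_cont m f g a b\<bar> < \<epsilon> / 6"
      proof -
        have "a \<in> K" "b \<in> K" using XK a b by auto
        moreover have "0 < b - a" "b - a < \<delta>c" using ab baD dX unfolding \<delta>_def by auto
        ultimately show ?thesis using \<delta>c(2) by blast
      qed
      moreover have Vc: "0 < V_cont m f g a b" by (rule Vc_pos[OF ab])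
      ultimately have "\<bar>A_cont m f g h a b\<bar> < \<epsilon> / 6 * V_cont m f g a b"
        by (simp add: abs_divide pos_divide_less_eq)
      also have "\<dots> \<le> \<epsilon> / 6 * (3 * V_disc m X f g a b)"
        using KE2 \<epsilon> by (simp add: mult_left_mono)
      finally have Ac: "\<bar>A_cont m f g h a b\<bar> < \<epsilon> / 2 * V_disc m X f g a b" by simp
      have "44 * \<omega> * V_disc m X f g a b \<le> \<epsilon> / 4 * V_disc m X f g a b"
        using \<omega>0 Vd by (simp add: mult_right_mono)
      have "\<bar>A_disc m X f g h a b\<bar> < \<epsilon> * V_disc m X f g a b"
      proof -
        have "\<bar>A_disc m X f g h a b\<bar> \<le> \<bar>A_cont m f g h a b\<bar> + \<bar>A_cont m f g h a b - A_disc m X f g h a b\<bar>"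
          by arith
        moreover have "\<epsilon> / 2 * V_disc m X f g a b + \<epsilon> / 4 * V_disc m X f g a b < \<epsilon> * V_disc m X f g a b"
          using Vd \<epsilon> by (simp add: algebra_simps)
        ultimately show ?thesis using Ac KE1 \<open>44 * \<omega> * V_disc m X f g a b \<le> \<epsilon> / 4 * V_disc m X f g a b\<close> by linarith
      qed
      then show "\<bar>A_disc m X f g h a b / V_disc m X f g a b\<bar> < \<epsilon>"
        using Vd by (simp add: abs_divide pos_divide_less_eq)
    qed
  qed
qed

theorem lemma4p4:
  fixes m :: nat and f g h :: "real \<Rightarrow> real" and K :: "real set"
  assumes "0 < m"
    and "Cm_curve m f g h"
    and "compact K"
    and "infinite K \<or> m + 1 \<le> card K"
    and "AV_condition m f g h K"
  shows "(\<forall>\<epsilon>>0. \<exists>\<delta>>0. \<forall>X a b. X \<subseteq> K \<and> card X = m + 1 \<and> diameter X < \<delta>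
            \<and> a \<in> X \<and> b \<in> X \<and> a < b \<longrightarrow>
            \<bar>A_cont m f g h a b / V_cont m f g a b - A_disc m X f g h a b / V_disc m X f g a b\<bar> < \<epsilon>)
         \<and> discrete_AV_condition m f g h K"
proof
  have D: "discrete_AV_condition m f g h K"
    by (rule discrete_from_AV[OF assms(1,2,3,5)])
  then show "discrete_AV_condition m f g h K" .
  show "\<forall>\<epsilon>>0. \<exists>\<delta>>0. \<forall>X a b. X \<subseteq> K \<and> card X = m + 1 \<and> diameter X < \<delta>
            \<and> a \<in> X \<and> b \<in> X \<and> a < b \<longrightarrow>
            \<bar>A_cont m f g h a b / V_cont m f g a b - A_disc m X f g h a b / V_disc m X f g a b\<bar> < \<epsilon>"
  proof (intro allI impI)
    fix \<epsilon> :: real assume \<epsilon>: "0 < \<epsilon>"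
    have e2: "\<epsilon> / 2 > 0" using \<epsilon> by simp
    have "\<exists>\<delta>1>0. \<forall>X a b. X \<subseteq> K \<and> card X = m + 1 \<and> diameter X < \<delta>1
        \<and> a \<in> X \<and> b \<in> X \<and> a < b \<longrightarrow> \<bar>A_disc m X f g h a b / V_disc m X f g a b\<bar> < \<epsilon> / 2"
      using D e2 unfolding discrete_AV_condition_def by blast
    then obtain \<delta>1 where \<delta>1: "\<delta>1 > 0" "\<forall>X a b. X \<subseteq> K \<and> card X = m + 1 \<and> diameter X < \<delta>1
        \<and> a \<in> X \<and> b \<in> X \<and> a < b \<longrightarrow> \<bar>A_disc m X f g h a b / V_disc m X f g a b\<bar> < \<epsilon> / 2"
      by blast
    have "\<exists>\<delta>2>0. \<forall>a\<in>K. \<forall>b\<in>K. 0 < b - a \<and> b - a < \<delta>2 \<longrightarrow>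
        \<bar>A_cont m f g h a b / V_cont m f g a b\<bar> < \<epsilon> / 2"
      using assms(5) e2 unfolding AV_condition_def by blast
    then obtain \<delta>2 where \<delta>2: "\<delta>2 > 0" "\<forall>a\<in>K. \<forall>b\<in>K. 0 < b - a \<and> b - a < \<delta>2 \<longrightarrow>
        \<bar>A_cont m f g h a b / V_cont m f g a b\<bar> < \<epsilon> / 2"
      by blast
    show "\<exists>\<delta>>0. \<forall>X a b. X \<subseteq> K \<and> card X = m + 1 \<and> diameter X < \<delta>
            \<and> a \<in> X \<and> b \<in> X \<and> a < b \<longrightarrow>
            \<bar>A_cont m f g h a b / V_cont m f g a b - A_disc m X f g h a b / V_disc m X f g a b\<bar> < \<epsilon>"
    proof (intro exI[of _ "min \<delta>1 \<delta>2"] conjI allI impI)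
      show "0 < min \<delta>1 \<delta>2" using \<delta>1 \<delta>2 by simp
      fix X a b assume H: "X \<subseteq> K \<and> card X = m + 1 \<and> diameter X < min \<delta>1 \<delta>2 \<and> a \<in> X \<and> b \<in> X \<and> a < b"
      then have fX: "finite X" by (metis card.infinite add_is_0 one_neq_zero)
      have ne: "X \<noteq> {}" using H by auto
      have baD: "b - a \<le> diameter X" unfolding diameter_finite_real[OF fX ne] using H fX by (simp add: diff_mono)
      moreover have "a \<in> K" "b \<in> K" "0 < b - a" using H by auto
      moreover have "b - a < \<delta>2" "diameter X < \<delta>1" using H baD by auto
      ultimately have 1: "\<bar>A_cont m f g h a b / V_cont m f g a b\<bar> < \<epsilon> / 2" using \<delta>2(2) by auto
      have 2: "\<bar>A_disc m X f g h a b / V_disc m X f g a b\<bar> < \<epsilon> / 2"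
        using \<delta>1(2) H \<open>diameter X < \<delta>1\<close> by blast
      show "\<bar>A_cont m f g h a b / V_cont m f g a b - A_disc m X f g h a b / V_disc m X f g a b\<bar> < \<epsilon>"
        using 1 2 by linarith
    qed
  qed
qed


end
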